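(* Let $G$ be a finite simple graph and let $\mathcal{V}$ be a maximum-cardinality collection of pairwise edge-disjoint triangles of $G$. Let $t\notin\mathcal{V}$ be a triangle sharing an edge with exactly two triangles $\psi_1,\psi_2\in\mathcal{V}$, where neither $\psi_1$ nor $\psi_2$ is of type $0$. Then: (1) $type(t)\neq[3,3]$, so the type of $t$ is either $[1,3]$ or $[1,1]$. (2) If $type(t)=[1,3]$ with $type(\psi_1)=1$ and $type(\psi_2)=3$, then either (i) $base(\psi_1)\in E(t)$, or (ii) exactly one triangle is singly-attached to $\psi_1$ and its anchoring vertex lies in $V(t)$; in this case $base(\psi_1)$ does not contain the common vertex of $V(\psi_1)\cap V(\psi_2)$.
   Context: Triangles are sets of three pairwise adjacent vertices, identified with their edge sets. A triangle $t\notin\mathcal{V}$ is singly-attached to $\psi\in\mathcal{V}$ if $\psi$ is the only triangle of $\mathcal{V}$ sharing an edge with $t$; the shared edge is a base-edge and the vertex of $V(t)\setminus V(\psi)$ is the anchoring vertex of $t$. For $\psi\in\mathcal{V}$, $base(\psi)$ is the set of edges of $\psi$ that are base-edges of triangles singly-attached to $\psi$, and $\psi$ has type $i$ if $|base(\psi)|=i$; when $|base(\psi)|=1$ we also write $base(\psi)$ for its unique base-edge. A triangle $t\notin\mathcal{V}$ sharing an edge with exactly two triangles $\psi_1,\psi_2\in\mathcal{V}$ has type $[type(\psi_1),type(\psi_2)]$, listed in nondecreasing order. *)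

theory Defs
  imports Main
begin

definition simple_graph :: "'a set set \<Rightarrow> bool" where
  "simple_graph E \<longleftrightarrow> finite E \<and> (\<forall>e\<in>E. card e = 2)"

definition is_triangle :: "'a set set \<Rightarrow> 'a set set \<Rightarrow> bool" where
  "is_triangle E t \<longleftrightarrow> (\<exists>a b c. a \<noteq> b \<and> b \<noteq> c \<and> a \<noteq> c \<and>
      {a,b} \<in> E \<and> {b,c} \<in> E \<and> {a,c} \<in> E \<and> t = {{a,b},{b,c},{a,c}})"

definition tri_verts :: "'a set set \<Rightarrow> 'a set" where
  "tri_verts t = \<Union>t"

definition edge_disjoint_packing :: "'a set set \<Rightarrow> 'a set set set \<Rightarrow> bool" where
  "edge_disjoint_packing E W \<longleftrightarrow> (\<forall>t\<in>W. is_triangle E t) \<and>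
      (\<forall>t1\<in>W. \<forall>t2\<in>W. t1 \<noteq> t2 \<longrightarrow> t1 \<inter> t2 = {})"

definition max_packing :: "'a set set \<Rightarrow> 'a set set set \<Rightarrow> bool" where
  "max_packing E \<V> \<longleftrightarrow> edge_disjoint_packing E \<V> \<and>
      (\<forall>W. edge_disjoint_packing E W \<longrightarrow> card W \<le> card \<V>)"

definition singly_attached :: "'a set set \<Rightarrow> 'a set set set \<Rightarrow> 'a set set \<Rightarrow> 'a set set \<Rightarrow> bool" where
  "singly_attached E \<V> t \<psi> \<longleftrightarrow> is_triangle E t \<and> t \<notin> \<V> \<and> \<psi> \<in> \<V> \<and> t \<inter> \<psi> \<noteq> {} \<and>
      (\<forall>\<phi>\<in>\<V>. t \<inter> \<phi> \<noteq> {} \<longrightarrow> \<phi> = \<psi>)"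

definition anchor :: "'a set set \<Rightarrow> 'a set set \<Rightarrow> 'a" where
  "anchor t \<psi> = the_elem (tri_verts t - tri_verts \<psi>)"

definition base :: "'a set set \<Rightarrow> 'a set set set \<Rightarrow> 'a set set \<Rightarrow> 'a set set" where
  "base E \<V> \<psi> = {e \<in> \<psi>. \<exists>t. singly_attached E \<V> t \<psi> \<and> e \<in> t}"

text \<open>The unique base edge, when |base(psi)| = 1.\<close>
definition base_edge :: "'a set set \<Rightarrow> 'a set set set \<Rightarrow> 'a set set \<Rightarrow> 'a set" where
  "base_edge E \<V> \<psi> = the_elem (base E \<V> \<psi>)"

definition tri_type :: "'a set set \<Rightarrow> 'a set set set \<Rightarrow> 'a set set \<Rightarrow> nat" where
  "tri_type E \<V> \<psi> = card (base E \<V> \<psi>)"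

end

theory Submission
  imports Defs
begin

definition tri :: "'a \<Rightarrow> 'a \<Rightarrow> 'a \<Rightarrow> 'a set set" where
  "tri a b c = {{a,b},{b,c},{a,c}}"

lemma tri_char:
  assumes "a \<noteq> b" "b \<noteq> c" "a \<noteq> c"
  shows "tri a b c = {e. \<exists>p q. p \<noteq> q \<and> p \<in> {a,b,c} \<and> q \<in> {a,b,c} \<and> e = {p,q}}"
proof (rule set_eqI, rule iffI)
  fix e assume "e \<in> tri a b c" then show "e \<in> {e. \<exists>p q. p \<noteq> q \<and> p \<in> {a,b,c} \<and> q \<in> {a,b,c} \<and> e = {p,q}}"
    using assms unfolding tri_def by blast
next
  fix e assume "e \<in> {e. \<exists>p q. p \<noteq> q \<and> p \<in> {a,b,c} \<and> q \<in> {a,b,c} \<and> e = {p,q}}"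
  then obtain p q where "p \<noteq> q" "p \<in> {a,b,c}" "q \<in> {a,b,c}" "e = {p,q}" by blast
  then show "e \<in> tri a b c" unfolding tri_def by (auto simp: doubleton_eq_iff)
qed

lemma mem_tri:
  assumes "a \<noteq> b" "b \<noteq> c" "a \<noteq> c"
  shows "e \<in> tri a b c \<longleftrightarrow> (\<exists>p q. p \<noteq> q \<and> p \<in> {a,b,c} \<and> q \<in> {a,b,c} \<and> e = {p,q})"
  using tri_char[OF assms] by blast

lemma dbl_mem_tri:
  assumes "a \<noteq> b" "b \<noteq> c" "a \<noteq> c" "p \<noteq> q"
  shows "{p,q} \<in> tri a b c \<longleftrightarrow> p \<in> {a,b,c} \<and> q \<in> {a,b,c}"
  using assms unfolding tri_def by (auto simp: doubleton_eq_iff)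

lemma tri_verts_tri: "tri_verts (tri a b c) = {a,b,c}"
  unfolding tri_verts_def tri_def by auto

lemma tri_eq:
  assumes "a \<noteq> b" "b \<noteq> c" "a \<noteq> c" "x \<noteq> y" "y \<noteq> z" "x \<noteq> z"
  shows "tri a b c = tri x y z \<longleftrightarrow> {a,b,c} = {x,y,z}"
proof
  assume eq: "tri a b c = tri x y z"
  show "{a,b,c} = {x,y,z}" using arg_cong[OF eq, of tri_verts] by (simp add: tri_verts_tri)
next
  assume "{a,b,c} = {x,y,z}"
  then show "tri a b c = tri x y z" by (simp add: tri_char[OF assms(1-3)] tri_char[OF assms(4-6)])
qed

lemma tri_inter:
  assumes "a \<noteq> b" "b \<noteq> c" "a \<noteq> c" "x \<noteq> y" "y \<noteq> z" "x \<noteq> z"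
  shows "tri a b c \<inter> tri x y z \<noteq> {} \<longleftrightarrow>
     (\<exists>p q. p \<noteq> q \<and> p \<in> {a,b,c} \<and> q \<in> {a,b,c} \<and> p \<in> {x,y,z} \<and> q \<in> {x,y,z})"
proof
  assume "tri a b c \<inter> tri x y z \<noteq> {}"
  then obtain e where "e \<in> tri a b c" "e \<in> tri x y z" by blast
  then obtain p q where "p \<noteq> q" "p \<in> {a,b,c}" "q \<in> {a,b,c}" "e = {p,q}"
    using mem_tri[OF assms(1-3)] by blast
  moreover have "p \<in> {x,y,z} \<and> q \<in> {x,y,z}" using \<open>e \<in> tri x y z\<close> calculation
    dbl_mem_tri[OF assms(4-6)] by blast
  ultimately show "\<exists>p q. p \<noteq> q \<and> p \<in> {a,b,c} \<and> q \<in> {a,b,c} \<and> p \<in> {x,y,z} \<and> q \<in> {x,y,z}" by blast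
next
  assume "\<exists>p q. p \<noteq> q \<and> p \<in> {a,b,c} \<and> q \<in> {a,b,c} \<and> p \<in> {x,y,z} \<and> q \<in> {x,y,z}"
  then obtain p q where pq: "p \<noteq> q" and "p \<in> {a,b,c} \<and> q \<in> {a,b,c} \<and> p \<in> {x,y,z} \<and> q \<in> {x,y,z}" by blast
  then have "{p,q} \<in> tri a b c \<inter> tri x y z" using dbl_mem_tri[OF assms(1-3) pq] dbl_mem_tri[OF assms(4-6) pq] by blast
  then show "tri a b c \<inter> tri x y z \<noteq> {}" by blast
qed

lemma tri_disj:
  assumes "a \<noteq> b" "b \<noteq> c" "a \<noteq> c" "x \<noteq> y" "y \<noteq> z" "x \<noteq> z"
    and "\<And>p q. p \<in> {a,b,c} \<Longrightarrow> q \<in> {a,b,c} \<Longrightarrow> p \<in> {x,y,z} \<Longrightarrow> q \<in> {x,y,z} \<Longrightarrow> p = q"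
  shows "tri a b c \<inter> tri x y z = {}"
  using tri_inter[OF assms(1-6)] assms(7) by blast

lemma is_triangle_tri: "is_triangle E t \<longleftrightarrow> (\<exists>a b c. a \<noteq> b \<and> b \<noteq> c \<and> a \<noteq> c \<and>
      {a,b} \<in> E \<and> {b,c} \<in> E \<and> {a,c} \<in> E \<and> t = tri a b c)"
  unfolding is_triangle_def tri_def by (rule refl)

lemma tri_ne: "tri a b c \<noteq> {}" unfolding tri_def by auto

lemma tri_perm1: "tri a b c = tri b a c" unfolding tri_def by (auto simp: insert_commute)
lemma tri_perm2: "tri a b c = tri a c b" unfolding tri_def by (auto simp: insert_commute)

lemma card_tri: "a \<noteq> b \<Longrightarrow> b \<noteq> c \<Longrightarrow> a \<noteq> c \<Longrightarrow> card (tri a b c) = 3"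
  unfolding tri_def by (auto simp: doubleton_eq_iff)

lemma third:
  assumes "a \<noteq> b" "b \<noteq> c" "a \<noteq> c" "p \<noteq> q" "p \<in> {a,b,c}" "q \<in> {a,b,c}"
  shows "\<exists>d. {a,b,c} = {p,q,d} \<and> d \<noteq> p \<and> d \<noteq> q"
  using assms by (auto simp: insert_commute)

lemma tri_sub_E: "is_triangle E t \<Longrightarrow> t \<subseteq> E"
  unfolding is_triangle_def by auto

lemma mp_pack: "max_packing E V \<Longrightarrow> edge_disjoint_packing E V" by (simp add: max_packing_def)
lemma pack_tri: "edge_disjoint_packing E V \<Longrightarrow> t \<in> V \<Longrightarrow> is_triangle E t"
  by (simp add: edge_disjoint_packing_def)
lemma pack_disj: "edge_disjoint_packing E V \<Longrightarrow> t1 \<in> V \<Longrightarrow> t2 \<in> V \<Longrightarrow> t1 \<noteq> t2 \<Longrightarrow> t1 \<inter> t2 = {}"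
  by (simp add: edge_disjoint_packing_def)
lemma mp_card: "max_packing E V \<Longrightarrow> edge_disjoint_packing E W \<Longrightarrow> card W \<le> card V"
  by (simp add: max_packing_def)

lemma finV: "max_packing E V \<Longrightarrow> finite E \<Longrightarrow> finite V"
proof -
  assume mp: "max_packing E V" and fin: "finite E"
  have "V \<subseteq> Pow E" using pack_tri[OF mp_pack[OF mp]] tri_sub_E by blast
  then show "finite V" using fin finite_subset by blast
qed

lemma replace:
  assumes mp: "max_packing E V" and fin: "finite E" and X: "X \<subseteq> V" and finY: "finite Y"
    and Ytri: "\<forall>y\<in>Y. is_triangle E y \<and> y \<notin> V"
    and Ydisj: "\<forall>y1\<in>Y. \<forall>y2\<in>Y. y1 \<noteq> y2 \<longrightarrow> y1 \<inter> y2 = {}"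
    and Yonly: "\<forall>y\<in>Y. \<forall>\<phi>\<in>V. y \<inter> \<phi> \<noteq> {} \<longrightarrow> \<phi> \<in> X"
    and lt: "card X < card Y"
  shows False
proof -
  have finV: "finite V" using finV[OF mp fin] .
  let ?W = "(V - X) \<union> Y"
  have pV: "edge_disjoint_packing E V" using mp by (rule mp_pack)
  have "edge_disjoint_packing E ?W"
    unfolding edge_disjoint_packing_def
  proof (intro conjI ballI impI)
    fix s assume "s \<in> ?W" then show "is_triangle E s" using pack_tri[OF pV] Ytri by blast
  next
    fix t1 t2 assume t1: "t1 \<in> ?W" and t2: "t2 \<in> ?W" and ne: "t1 \<noteq> t2"
    show "t1 \<inter> t2 = {}"
    proof (cases "t1 \<in> Y")
      case True
      then show ?thesis
      proof (cases "t2 \<in> Y")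
        case True then show ?thesis using \<open>t1 \<in> Y\<close> Ydisj ne by blast
      next
        case False then have "t2 \<in> V - X" using t2 by blast
        then show ?thesis using Yonly \<open>t1 \<in> Y\<close> by blast
      qed
    next
      case False then have "t1 \<in> V - X" using t1 by blast
      show ?thesis
      proof (cases "t2 \<in> Y")
        case True then show ?thesis using Yonly \<open>t1 \<in> V - X\<close> by blast
      next
        case False then have "t2 \<in> V - X" using t2 by blast
        then show ?thesis using pack_disj[OF pV] \<open>t1 \<in> V - X\<close> ne by blast
      qed
    qed
  qed
  then have le: "card ?W \<le> card V" using mp_card[OF mp] by blast
  have "(V - X) \<inter> Y = {}" using Ytri by blast
  then have "card ?W = card (V - X) + card Y" using finV finY by (simp add: card_Un_disjoint)
  moreover have "card (V - X) = card V - card X" using X finV by (simp add: card_Diff_subset finite_subset)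
  moreover have "card X \<le> card V" using X finV by (simp add: card_mono)
  ultimately show False using le lt by linarith
qed

lemma sa_form:
  assumes mp: "max_packing E V" and psi: "\<psi> = tri x y z" and d: "x \<noteq> y" "y \<noteq> z" "x \<noteq> z"
    and sa: "singly_attached E V s \<psi>"
  shows "\<exists>p q e. p \<noteq> q \<and> p \<in> {x,y,z} \<and> q \<in> {x,y,z} \<and> e \<notin> {x,y,z} \<and> s = tri p q e
     \<and> anchor s \<psi> = e \<and> {p,q} \<in> base E V \<psi>"
proof -
  obtain a b c where abc: "a \<noteq> b" "b \<noteq> c" "a \<noteq> c" and s: "s = tri a b c"
    using sa unfolding singly_attached_def is_triangle_tri by blast
  have "s \<inter> \<psi> \<noteq> {}" using sa unfolding singly_attached_def by blast
  then obtain p q where pq: "p \<noteq> q" "p \<in> {a,b,c}" "q \<in> {a,b,c}" "p \<in> {x,y,z}" "q \<in> {x,y,z}"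
    using tri_inter[OF abc d] s psi by blast
  obtain e where e: "{a,b,c} = {p,q,e}" "e \<noteq> p" "e \<noteq> q" using third[OF abc pq(1-3)] by blast
  have s2: "s = tri p q e" using s e tri_eq[OF abc] pq(1) by metis
  have "s \<noteq> \<psi>" using sa unfolding singly_attached_def by blast
  have ex: "e \<notin> {x,y,z}"
  proof
    assume "e \<in> {x,y,z}"
    then have "{p,q,e} = {x,y,z}" using pq e d by auto
    then have "s = \<psi>" using s2 psi tri_eq[OF pq(1) _ _ d] e by metis
    then show False using \<open>s \<noteq> \<psi>\<close> by blast
  qed
  have "tri_verts s - tri_verts \<psi> = {p,q,e} - {x,y,z}" by (simp add: s2 psi tri_verts_tri)
  also have "\<dots> = {e}" using ex pq(4,5) by auto
  finally have "tri_verts s - tri_verts \<psi> = {e}" .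
  then have an: "anchor s \<psi> = e" unfolding anchor_def by simp
  have "{p,q} \<in> s" using s2 unfolding tri_def by blast
  moreover have "{p,q} \<in> \<psi>" using psi dbl_mem_tri[OF d pq(1)] pq by blast
  ultimately have "{p,q} \<in> base E V \<psi>" using sa unfolding base_def by blast
  then show ?thesis using pq ex s2 an by blast
qed

lemma base_sa:
  assumes mp: "max_packing E V" and psi: "\<psi> = tri x y z" and d: "x \<noteq> y" "y \<noteq> z" "x \<noteq> z"
    and pq: "p \<noteq> q" "p \<in> {x,y,z}" "q \<in> {x,y,z}" and b: "{p,q} \<in> base E V \<psi>"
  shows "\<exists>e. e \<notin> {x,y,z} \<and> singly_attached E V (tri p q e) \<psi>"
proof -
  obtain s where sa: "singly_attached E V s \<psi>" and ps: "{p,q} \<in> s" using b unfolding base_def by blast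
  obtain p' q' e where f: "p' \<noteq> q'" "p' \<in> {x,y,z}" "q' \<in> {x,y,z}" "e \<notin> {x,y,z}" "s = tri p' q' e"
    using sa_form[OF mp psi d sa] by blast
  have qe: "q' \<noteq> e" "p' \<noteq> e" using f by auto
  then have "p \<in> {p',q',e} \<and> q \<in> {p',q',e}" using ps f dbl_mem_tri[OF f(1) qe pq(1)] by blast
  then have "{p',q',e} = {p,q,e}" using pq f by auto
  moreover have pe: "q \<noteq> e" "p \<noteq> e" using pq f(4) by auto
  ultimately have "s = tri p q e" using f(5) tri_eq[OF f(1) qe(1) qe(2) pq(1) pe(1) pe(2)] by simp
  then show ?thesis using sa f by blast
qed

lemma anchor_eq:
  assumes mp: "max_packing E V" and fin: "finite E" and V: "\<psi> \<in> V" and psi: "\<psi> = tri x y z"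
    and d: "x \<noteq> y" "y \<noteq> z" "x \<noteq> z"
    and s1: "singly_attached E V (tri p1 q1 a1) \<psi>" and s2: "singly_attached E V (tri p2 q2 a2) \<psi>"
    and pq: "p1 \<noteq> q1" "p2 \<noteq> q2" "p1 \<in> {x,y,z}" "q1 \<in> {x,y,z}" "p2 \<in> {x,y,z}" "q2 \<in> {x,y,z}"
    and ne: "{p1,q1} \<noteq> {p2,q2}" and a: "a1 \<notin> {x,y,z}" "a2 \<notin> {x,y,z}"
  shows "a1 = a2"
proof (rule ccontr)
  assume na: "a1 \<noteq> a2"
  have d1: "p1 \<noteq> a1" "q1 \<noteq> a1" "p2 \<noteq> a2" "q2 \<noteq> a2" using pq a by auto
  have disj: "tri p1 q1 a1 \<inter> tri p2 q2 a2 = {}"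
  proof (rule tri_disj)
    fix r r' assume r: "r \<in> {p1,q1,a1}" "r' \<in> {p1,q1,a1}" "r \<in> {p2,q2,a2}" "r' \<in> {p2,q2,a2}"
    have "r \<in> {p1,q1} \<inter> {p2,q2}" "r' \<in> {p1,q1} \<inter> {p2,q2}" using r pq a na by auto
    then show "r = r'" using ne pq by (auto simp: doubleton_eq_iff)
  qed (use pq d1 in auto)
  show False
  proof (rule replace[OF mp fin, of "{\<psi>}" "{tri p1 q1 a1, tri p2 q2 a2}"])
    show "{\<psi>} \<subseteq> V" using V by simp
    show "\<forall>y\<in>{tri p1 q1 a1, tri p2 q2 a2}. is_triangle E y \<and> y \<notin> V"
      using s1 s2 unfolding singly_attached_def by blast
    show "\<forall>y1\<in>{tri p1 q1 a1, tri p2 q2 a2}. \<forall>y2\<in>{tri p1 q1 a1, tri p2 q2 a2}. y1 \<noteq> y2 \<longrightarrow> y1 \<inter> y2 = {}"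
      using disj by auto
    show "\<forall>y\<in>{tri p1 q1 a1, tri p2 q2 a2}. \<forall>\<phi>\<in>V. y \<inter> \<phi> \<noteq> {} \<longrightarrow> \<phi> \<in> {\<psi>}"
      using s1 s2 unfolding singly_attached_def by blast
    have "tri p1 q1 a1 \<noteq> tri p2 q2 a2" using disj tri_ne by fastforce
    then show "card {\<psi>} < card {tri p1 q1 a1, tri p2 q2 a2}" by simp
  qed simp
qed

lemma base_full:
  assumes mp: "max_packing E V" and fin: "finite E" and V: "\<psi> \<in> V" and psi: "\<psi> = tri x y z"
    and d: "x \<noteq> y" "y \<noteq> z" "x \<noteq> z"
    and b1: "{x,y} \<in> base E V \<psi>" and b2: "{y,z} \<in> base E V \<psi>"
  shows "base E V \<psi> = \<psi>"
proof -
  have pV: "edge_disjoint_packing E V" using mp by (rule mp_pack)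
  obtain a where a: "a \<notin> {x,y,z}" and s1: "singly_attached E V (tri x y a) \<psi>"
    using base_sa[OF mp psi d, of x y] b1 d by auto
  obtain a' where a': "a' \<notin> {x,y,z}" and s2: "singly_attached E V (tri y z a') \<psi>"
    using base_sa[OF mp psi d, of y z] b2 d by auto
  have "a = a'"
    by (rule anchor_eq[OF mp fin V psi d s1 s2]) (use d a a' in \<open>auto simp: doubleton_eq_iff\<close>)
  then have s2: "singly_attached E V (tri y z a) \<psi>" using s2 by simp
  let ?s = "tri x z a"
  have "is_triangle E \<psi>" using pack_tri[OF pV V] .
  then have "\<psi> \<subseteq> E" by (rule tri_sub_E)
  then have xz: "{x,z} \<in> E" using psi unfolding tri_def by blast
  have "tri x y a \<subseteq> E" using s1 tri_sub_E unfolding singly_attached_def by blast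
  then have xa: "{x,a} \<in> E" unfolding tri_def by blast
  have "tri y z a \<subseteq> E" using s2 tri_sub_E unfolding singly_attached_def by blast
  then have za: "{z,a} \<in> E" unfolding tri_def by blast
  have tr: "is_triangle E ?s" unfolding is_triangle_tri using xz xa za d a
    by (intro exI[of _ x] exI[of _ z] exI[of _ a]) auto
  have xzs: "{x,z} \<in> ?s" "{x,z} \<in> \<psi>" using psi unfolding tri_def by auto
  have only: "\<forall>\<phi>\<in>V. ?s \<inter> \<phi> \<noteq> {} \<longrightarrow> \<phi> = \<psi>"
  proof (intro ballI impI)
    fix \<phi> assume "\<phi> \<in> V" "?s \<inter> \<phi> \<noteq> {}"
    then obtain e where e: "e \<in> ?s" "e \<in> \<phi>" by blast
    then have "e = {x,z} \<or> e = {z,a} \<or> e = {x,a}" unfolding tri_def by (auto simp: insert_commute)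
    moreover {
      assume "e = {x,z}"
      then have "\<phi> \<inter> \<psi> \<noteq> {}" using e xzs by blast
      then have "\<phi> = \<psi>" using pack_disj[OF pV \<open>\<phi> \<in> V\<close> V] by blast }
    moreover {
      assume "e = {z,a}"
      then have "tri y z a \<inter> \<phi> \<noteq> {}" using e unfolding tri_def by blast
      then have "\<phi> = \<psi>" using s2 \<open>\<phi> \<in> V\<close> unfolding singly_attached_def by blast }
    moreover {
      assume "e = {x,a}"
      then have "tri x y a \<inter> \<phi> \<noteq> {}" using e unfolding tri_def by blast
      then have "\<phi> = \<psi>" using s1 \<open>\<phi> \<in> V\<close> unfolding singly_attached_def by blast }
    ultimately show "\<phi> = \<psi>" by blast
  qed
  have "?s \<notin> V"
  proof
    assume "?s \<in> V"
    then have "?s = \<psi>" using only xzs by blast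
    then have "tri_verts ?s = tri_verts \<psi>" by simp
    then show False using a psi by (simp add: tri_verts_tri) blast
  qed
  then have "singly_attached E V ?s \<psi>" unfolding singly_attached_def using tr V xzs only by blast
  then have "{x,z} \<in> base E V \<psi>" using xzs unfolding base_def by blast
  then have "\<psi> \<subseteq> base E V \<psi>" using b1 b2 psi unfolding tri_def by blast
  moreover have "base E V \<psi> \<subseteq> \<psi>" unfolding base_def by blast
  ultimately show ?thesis by blast
qed

lemma type_cases:
  assumes mp: "max_packing E V" and fin: "finite E" and V: "\<psi> \<in> V"
  shows "tri_type E V \<psi> \<in> {0,1,3} \<and> (tri_type E V \<psi> = 3 \<longrightarrow> base E V \<psi> = \<psi>)"
proof -
  have pV: "edge_disjoint_packing E V" using mp by (rule mp_pack)
  obtain x y z where d: "x \<noteq> y" "y \<noteq> z" "x \<noteq> z" and psi: "\<psi> = tri x y z"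
    using pack_tri[OF pV V] unfolding is_triangle_tri by blast
  have sub: "base E V \<psi> \<subseteq> \<psi>" unfolding base_def by blast
  have c3: "card \<psi> = 3" using psi card_tri d by simp
  have finp: "finite \<psi>" using psi unfolding tri_def by simp
  have finb: "finite (base E V \<psi>)" using sub finp finite_subset by blast
  have full: "base E V \<psi> = \<psi>" if two: "\<not> card (base E V \<psi>) \<le> 1"
  proof -
    have "\<exists>e1\<in>base E V \<psi>. \<exists>e2\<in>base E V \<psi>. e1 \<noteq> e2"
      using two card_le_Suc0_iff_eq[OF finb] by simp
    then obtain e1 e2 where e: "e1 \<in> base E V \<psi>" "e2 \<in> base E V \<psi>" "e1 \<noteq> e2" by blast
    then have "e1 \<in> tri x y z" "e2 \<in> tri x y z" using sub psi by auto
    then have E1: "e1 = {x,y} \<or> e1 = {y,z} \<or> e1 = {x,z}"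
      and E2: "e2 = {x,y} \<or> e2 = {y,z} \<or> e2 = {x,z}" unfolding tri_def by simp_all
    have c1: "{y,x} = {x,y}" "{z,y} = {y,z}" by (simp_all add: insert_commute)
    have F1: "base E V \<psi> = \<psi>" if "{x,y} \<in> base E V \<psi>" "{y,z} \<in> base E V \<psi>"
      by (rule base_full[OF mp fin V psi d that])
    have F2: "base E V \<psi> = \<psi>" if "{x,y} \<in> base E V \<psi>" "{x,z} \<in> base E V \<psi>"
    proof (rule base_full[OF mp fin V _ d(1)[symmetric] d(3) d(2)])
      show "\<psi> = tri y x z" using psi tri_perm1 by metis
      show "{y,x} \<in> base E V \<psi>" using that(1) c1 by simp
      show "{x,z} \<in> base E V \<psi>" using that(2) by simp
    qed
    have F3: "base E V \<psi> = \<psi>" if "{x,z} \<in> base E V \<psi>" "{y,z} \<in> base E V \<psi>"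
    proof (rule base_full[OF mp fin V _ d(3) d(2)[symmetric] d(1)])
      show "\<psi> = tri x z y" using psi tri_perm2 by metis
      show "{x,z} \<in> base E V \<psi>" using that(1) by simp
      show "{z,y} \<in> base E V \<psi>" using that(2) c1 by simp
    qed
    from E1 E2 show ?thesis
    proof (elim disjE)
    qed (use e F1 F2 F3 in auto)
  qed
  have le3: "card (base E V \<psi>) \<le> 3" using card_mono[OF finp sub] c3 by simp
  show ?thesis
  proof (cases "card (base E V \<psi>) \<le> 1")
    case True
    then have "card (base E V \<psi>) = 0 \<or> card (base E V \<psi>) = 1" by linarith
    then show ?thesis unfolding tri_type_def by auto
  next
    case False
    then have "base E V \<psi> = \<psi>" by (rule full)
    then show ?thesis unfolding tri_type_def using c3 by simp
  qed
qed

lemma core: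
  fixes E :: "'a set set" and \<V> :: "'a set set set" and t \<psi>1 \<psi>2 :: "'a set set"
  assumes fin: "finite E"
    and mp: "max_packing E \<V>"
    and tt: "is_triangle E t" and tV: "t \<notin> \<V>"
    and ne: "\<psi>1 \<noteq> \<psi>2"
    and set: "{\<phi> \<in> \<V>. t \<inter> \<phi> \<noteq> {}} = {\<psi>1, \<psi>2}"
    and ty1: "tri_type E \<V> \<psi>1 \<noteq> 0" and ty2: "tri_type E \<V> \<psi>2 \<noteq> 0"
    and t: "t = tri u v w" and p1: "\<psi>1 = tri u v p" and p2: "\<psi>2 = tri v w q"
    and d: "u \<noteq> v" "v \<noteq> w" "u \<noteq> w" "u \<noteq> p" "v \<noteq> p" "v \<noteq> q" "w \<noteq> q"
  shows "\<not> (tri_type E \<V> \<psi>1 = 3 \<and> tri_type E \<V> \<psi>2 = 3)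
         \<and> ((tri_type E \<V> \<psi>1 = 1 \<and> tri_type E \<V> \<psi>2 = 1)
            \<or> (tri_type E \<V> \<psi>1 = 1 \<and> tri_type E \<V> \<psi>2 = 3)
            \<or> (tri_type E \<V> \<psi>1 = 3 \<and> tri_type E \<V> \<psi>2 = 1))
         \<and> (tri_type E \<V> \<psi>1 = 1 \<and> tri_type E \<V> \<psi>2 = 3 \<longrightarrow>
              (base_edge E \<V> \<psi>1 \<in> t
               \<or> ((\<exists>!s. singly_attached E \<V> s \<psi>1) \<and>
                  (\<forall>s. singly_attached E \<V> s \<psi>1 \<longrightarrow> anchor s \<psi>1 \<in> tri_verts t)))
            \<and> ((\<exists>!s. singly_attached E \<V> s \<psi>1) \<and>
                  (\<forall>s. singly_attached E \<V> s \<psi>1 \<longrightarrow> anchor s \<psi>1 \<in> tri_verts t)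
               \<longrightarrow> (\<exists>v. tri_verts \<psi>1 \<inter> tri_verts \<psi>2 = {v} \<and> v \<notin> base_edge E \<V> \<psi>1)))"
proof -
  have pV: "edge_disjoint_packing E \<V>" using mp by (rule mp_pack)
  have V1: "\<psi>1 \<in> \<V>" and V2: "\<psi>2 \<in> \<V>" and tm1: "t \<inter> \<psi>1 \<noteq> {}" and tm2: "t \<inter> \<psi>2 \<noteq> {}"
    using set by blast+
  have only: "\<forall>\<phi>\<in>\<V>. t \<inter> \<phi> \<noteq> {} \<longrightarrow> \<phi> \<in> {\<psi>1,\<psi>2}" using set by blast
  have dj: "\<psi>1 \<inter> \<psi>2 = {}" using pack_disj[OF pV V1 V2 ne] .
  have wp: "w \<noteq> p"
  proof
    assume "w = p" then have "t = \<psi>1" using t p1 by simp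
    then show False using tV V1 by simp
  qed
  have uq: "u \<noteq> q"
  proof
    assume "u = q"
    have "{u,v,w} = {v,w,u}" by auto
    then have "tri u v w = tri v w u" using tri_eq[OF d(1) d(2) d(3) d(2)] d by simp
    then have "t = \<psi>2" using t p2 \<open>u = q\<close> by simp
    then show False using tV V2 by simp
  qed
  have pq: "p \<noteq> q"
  proof
    assume "p = q" then have "{v,p} \<in> \<psi>1 \<inter> \<psi>2" using p1 p2 unfolding tri_def by auto
    then show False using dj by blast
  qed
  note dd = d wp uq pq
  have T1: "tri_type E \<V> \<psi>1 = 1 \<or> tri_type E \<V> \<psi>1 = 3"
    and B1: "tri_type E \<V> \<psi>1 = 3 \<longrightarrow> base E \<V> \<psi>1 = \<psi>1"
    using type_cases[OF mp fin V1] ty1 by auto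
  have T2: "tri_type E \<V> \<psi>2 = 1 \<or> tri_type E \<V> \<psi>2 = 3"
    and B2: "tri_type E \<V> \<psi>2 = 3 \<longrightarrow> base E \<V> \<psi>2 = \<psi>2"
    using type_cases[OF mp fin V2] ty2 by auto
  have repl3: False if s1: "singly_attached E \<V> s \<psi>1" and s2: "singly_attached E \<V> B \<psi>2"
     and d1: "t \<inter> s = {}" and d2: "t \<inter> B = {}" and d3: "s \<inter> B = {}" for s B
  proof (rule replace[OF mp fin, of "{\<psi>1,\<psi>2}" "{t,s,B}"])
    show "{\<psi>1, \<psi>2} \<subseteq> \<V>" using V1 V2 by simp
    show "\<forall>y\<in>{t, s, B}. is_triangle E y \<and> y \<notin> \<V>" using tt tV s1 s2
      unfolding singly_attached_def by blast
    show "\<forall>y1\<in>{t, s, B}. \<forall>y2\<in>{t, s, B}. y1 \<noteq> y2 \<longrightarrow> y1 \<inter> y2 = {}" using d1 d2 d3 by blast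
    show "\<forall>y\<in>{t, s, B}. \<forall>\<phi>\<in>\<V>. y \<inter> \<phi> \<noteq> {} \<longrightarrow> \<phi> \<in> {\<psi>1, \<psi>2}" using only s1 s2
      unfolding singly_attached_def by blast
    have "s \<noteq> {}" "B \<noteq> {}" using s1 s2 unfolding singly_attached_def by blast+
    then have "t \<noteq> s" "t \<noteq> B" "s \<noteq> B" using d1 d2 d3 tm1 by blast+
    then show "card {\<psi>1, \<psi>2} < card {t, s, B}" using ne by simp
  qed simp
  have A2: "\<exists>a2. a2 \<notin> {v,w,q} \<and> a2 \<noteq> u \<and> a2 \<noteq> p \<and> singly_attached E \<V> (tri w q a2) \<psi>2"
    if "tri_type E \<V> \<psi>2 = 3"
  proof -
    have b: "base E \<V> \<psi>2 = \<psi>2" using B2 that by blast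
    have "{w,q} \<in> base E \<V> \<psi>2" "{v,w} \<in> base E \<V> \<psi>2" using b p2 unfolding tri_def by auto
    then obtain a2 c2 where a2: "a2 \<notin> {v,w,q}" "singly_attached E \<V> (tri w q a2) \<psi>2"
      and c2: "c2 \<notin> {v,w,q}" "singly_attached E \<V> (tri v w c2) \<psi>2"
    proof -
      obtain a2 where "a2 \<notin> {v,w,q}" "singly_attached E \<V> (tri w q a2) \<psi>2"
        using base_sa[OF mp p2 d(2) d(7) d(6) d(7)] \<open>{w,q} \<in> base E \<V> \<psi>2\<close> by blast
      moreover obtain c2 where "c2 \<notin> {v,w,q}" "singly_attached E \<V> (tri v w c2) \<psi>2"
        using base_sa[OF mp p2 d(2) d(7) d(6) d(2)] \<open>{v,w} \<in> base E \<V> \<psi>2\<close> by blast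
      ultimately show ?thesis using that by blast
    qed
    have "a2 = c2"
      by (rule anchor_eq[OF mp fin V2 p2 d(2) d(7) d(6) a2(2) c2(2)])
        (use dd a2(1) c2(1) in \<open>auto simp: doubleton_eq_iff\<close>)
    have "a2 \<noteq> u \<and> a2 \<noteq> p"
    proof (rule ccontr)
      assume "\<not> (a2 \<noteq> u \<and> a2 \<noteq> p)"
      moreover have "v \<noteq> a2" using a2(1) by auto
      ultimately have "{v,a2} \<in> \<psi>1" using dbl_mem_tri[OF d(1) d(5) d(4), of v a2] p1 by auto
      moreover have "{v,a2} \<in> tri v w c2" using \<open>a2 = c2\<close> unfolding tri_def by auto
      ultimately have "\<psi>1 = \<psi>2" using c2(2) V1 unfolding singly_attached_def by blast
      then show False using ne by simp
    qed
    then show ?thesis using a2 by blast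
  qed
  have A1: "\<exists>a1. a1 \<notin> {u,v,p} \<and> a1 \<noteq> w \<and> a1 \<noteq> q \<and> singly_attached E \<V> (tri u p a1) \<psi>1"
    if "tri_type E \<V> \<psi>1 = 3"
  proof -
    have b: "base E \<V> \<psi>1 = \<psi>1" using B1 that by blast
    have "{u,p} \<in> base E \<V> \<psi>1" "{u,v} \<in> base E \<V> \<psi>1" using b p1 unfolding tri_def by auto
    then obtain a1 c1 where a1: "a1 \<notin> {u,v,p}" "singly_attached E \<V> (tri u p a1) \<psi>1"
      and c1: "c1 \<notin> {u,v,p}" "singly_attached E \<V> (tri u v c1) \<psi>1"
    proof -
      obtain a1 where "a1 \<notin> {u,v,p}" "singly_attached E \<V> (tri u p a1) \<psi>1"
        using base_sa[OF mp p1 d(1) d(5) d(4) d(4)] \<open>{u,p} \<in> base E \<V> \<psi>1\<close> by blast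
      moreover obtain c1 where "c1 \<notin> {u,v,p}" "singly_attached E \<V> (tri u v c1) \<psi>1"
        using base_sa[OF mp p1 d(1) d(5) d(4) d(1)] \<open>{u,v} \<in> base E \<V> \<psi>1\<close> by blast
      ultimately show ?thesis using that by blast
    qed
    have "a1 = c1"
      by (rule anchor_eq[OF mp fin V1 p1 d(1) d(5) d(4) a1(2) c1(2)])
        (use dd a1(1) c1(1) in \<open>auto simp: doubleton_eq_iff\<close>)
    have "a1 \<noteq> w \<and> a1 \<noteq> q"
    proof (rule ccontr)
      assume "\<not> (a1 \<noteq> w \<and> a1 \<noteq> q)"
      moreover have "v \<noteq> a1" using a1(1) by auto
      ultimately have "{v,a1} \<in> \<psi>2" using dbl_mem_tri[OF d(2) d(7) d(6), of v a1] p2 by auto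
      moreover have "{v,a1} \<in> tri u v c1" using \<open>a1 = c1\<close> unfolding tri_def by auto
      ultimately have "\<psi>2 = \<psi>1" using c1(2) V2 unfolding singly_attached_def by blast
      then show False using ne by simp
    qed
    then show ?thesis using a1 by blast
  qed
  have not33: "\<not> (tri_type E \<V> \<psi>1 = 3 \<and> tri_type E \<V> \<psi>2 = 3)"
  proof
    assume h: "tri_type E \<V> \<psi>1 = 3 \<and> tri_type E \<V> \<psi>2 = 3"
    obtain a1 where a1: "a1 \<notin> {u,v,p}" "a1 \<noteq> w" "a1 \<noteq> q" "singly_attached E \<V> (tri u p a1) \<psi>1"
      using A1 h by blast
    obtain a2 where a2: "a2 \<notin> {v,w,q}" "a2 \<noteq> u" "a2 \<noteq> p" "singly_attached E \<V> (tri w q a2) \<psi>2"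
      using A2 h by blast
    show False
    proof (rule repl3[OF a1(4) a2(4)])
      show "t \<inter> tri u p a1 = {}" unfolding t by (rule tri_disj) (use dd a1 in auto)
      show "t \<inter> tri w q a2 = {}" unfolding t by (rule tri_disj) (use dd a2 in auto)
      show "tri u p a1 \<inter> tri w q a2 = {}" by (rule tri_disj) (use dd a1 a2 in auto)
    qed
  qed
  have part2: "tri_type E \<V> \<psi>1 = 1 \<and> tri_type E \<V> \<psi>2 = 3 \<longrightarrow>
              (base_edge E \<V> \<psi>1 \<in> t
               \<or> ((\<exists>!s. singly_attached E \<V> s \<psi>1) \<and>
                  (\<forall>s. singly_attached E \<V> s \<psi>1 \<longrightarrow> anchor s \<psi>1 \<in> tri_verts t)))
            \<and> ((\<exists>!s. singly_attached E \<V> s \<psi>1) \<and>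
                  (\<forall>s. singly_attached E \<V> s \<psi>1 \<longrightarrow> anchor s \<psi>1 \<in> tri_verts t)
               \<longrightarrow> (\<exists>v. tri_verts \<psi>1 \<inter> tri_verts \<psi>2 = {v} \<and> v \<notin> base_edge E \<V> \<psi>1))"
  proof (intro impI)
    assume h: "tri_type E \<V> \<psi>1 = 1 \<and> tri_type E \<V> \<psi>2 = 3"
    obtain a2 where a2: "a2 \<notin> {v,w,q}" "a2 \<noteq> u" "a2 \<noteq> p" "singly_attached E \<V> (tri w q a2) \<psi>2"
      using A2 h by blast
    have "card (base E \<V> \<psi>1) = 1" using h unfolding tri_type_def by simp
    then obtain b where bb: "base E \<V> \<psi>1 = {b}" by (rule card_1_singletonE)
    have be: "base_edge E \<V> \<psi>1 = b" unfolding base_edge_def bb by simp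
    have bin: "b \<in> \<psi>1" using bb unfolding base_def by blast
    then have bc: "b = {u,v} \<or> b = {v,p} \<or> b = {u,p}" using p1 unfolding tri_def by auto
    have form: "\<exists>p' q' e. p' \<noteq> q' \<and> p' \<in> {u,v,p} \<and> q' \<in> {u,v,p} \<and> e \<notin> {u,v,p} \<and> s = tri p' q' e
       \<and> anchor s \<psi>1 = e \<and> {p',q'} = b" if sa0: "singly_attached E \<V> s \<psi>1" for s
    proof -
      obtain p' q' e where f: "p' \<noteq> q'" "p' \<in> {u,v,p}" "q' \<in> {u,v,p}" "e \<notin> {u,v,p}" "s = tri p' q' e"
        "anchor s \<psi>1 = e" "{p',q'} \<in> base E \<V> \<psi>1"
        using sa_form[OF mp p1 d(1) d(5) d(4) sa0] by blast
      have "{p',q'} = b" using f(7) bb by simp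
      then show ?thesis using f(1-6) by blast
    qed
    have nvp: "b \<noteq> {v,p}"
    proof
      assume bvp: "b = {v,p}"
      obtain e where e: "e \<notin> {u,v,p}" "singly_attached E \<V> (tri v p e) \<psi>1"
      proof -
        have "{v,p} \<in> base E \<V> \<psi>1" using bb bvp by simp
        then show ?thesis using base_sa[OF mp p1 d(1) d(5) d(4) d(5)] that by blast
      qed
      show False
      proof (cases "e = w")
        case True
        then have "{v,w} \<in> tri v p e \<inter> \<psi>2" using p2 unfolding tri_def by auto
        then have "\<psi>2 = \<psi>1" using e(2) V2 unfolding singly_attached_def by blast
        then show False using ne by simp
      next
        case False
        show False
        proof (rule repl3[OF e(2) a2(4)])
          show "t \<inter> tri v p e = {}" unfolding t by (rule tri_disj) (use dd e False in auto)
          show "t \<inter> tri w q a2 = {}" unfolding t by (rule tri_disj) (use dd a2 in auto)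
          show "tri v p e \<inter> tri w q a2 = {}" by (rule tri_disj) (use dd e a2 in auto)
        qed
      qed
    qed
    have vert: "tri_verts \<psi>1 \<inter> tri_verts \<psi>2 = {v}" using p1 p2 dd by (auto simp: tri_verts_tri)
    from bc nvp have "b = {u,v} \<or> b = {u,p}" by blast
    then show "(base_edge E \<V> \<psi>1 \<in> t
               \<or> ((\<exists>!s. singly_attached E \<V> s \<psi>1) \<and>
                  (\<forall>s. singly_attached E \<V> s \<psi>1 \<longrightarrow> anchor s \<psi>1 \<in> tri_verts t)))
            \<and> ((\<exists>!s. singly_attached E \<V> s \<psi>1) \<and>
                  (\<forall>s. singly_attached E \<V> s \<psi>1 \<longrightarrow> anchor s \<psi>1 \<in> tri_verts t)
               \<longrightarrow> (\<exists>v. tri_verts \<psi>1 \<inter> tri_verts \<psi>2 = {v} \<and> v \<notin> base_edge E \<V> \<psi>1))"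
    proof
      assume buv: "b = {u,v}"
      have c1: "base_edge E \<V> \<psi>1 \<in> t" using be buv t unfolding tri_def by auto
      have c2: False if hh: "(\<exists>!s. singly_attached E \<V> s \<psi>1) \<and>
                  (\<forall>s. singly_attached E \<V> s \<psi>1 \<longrightarrow> anchor s \<psi>1 \<in> tri_verts t)"
      proof -
        obtain s where s: "singly_attached E \<V> s \<psi>1" using hh by blast
        then have "anchor s \<psi>1 \<in> tri_verts t" using hh by blast
        then have an: "anchor s \<psi>1 \<in> {u,v,w}" using t by (simp add: tri_verts_tri)
        obtain p' q' e where f: "p' \<noteq> q'" "p' \<in> {u,v,p}" "q' \<in> {u,v,p}" "e \<notin> {u,v,p}"
          "s = tri p' q' e" "anchor s \<psi>1 = e" "{p',q'} = b"
          using form[OF s] by blast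
        have ew: "e = w" using f an by auto
        have "v \<in> {p',q'}" using f(7) buv by blast
        then have "{v,w} \<in> s" using f(5) ew unfolding tri_def by auto
        then have "s \<inter> \<psi>2 \<noteq> {}" using p2 unfolding tri_def by auto
        then have "\<psi>2 = \<psi>1" using s V2 unfolding singly_attached_def by blast
        then show False using ne by simp
      qed
      show ?thesis using c1 c2 by blast
    next
      assume bup: "b = {u,p}"
      have all: "s = tri u p w" if s: "singly_attached E \<V> s \<psi>1" for s
      proof -
        obtain p' q' e where f: "p' \<noteq> q'" "p' \<in> {u,v,p}" "q' \<in> {u,v,p}" "e \<notin> {u,v,p}"
          "s = tri p' q' e" "anchor s \<psi>1 = e" "{p',q'} = b"
          using form[OF s] by blast
        have "(p' = u \<and> q' = p) \<or> (p' = p \<and> q' = u)" using f(7) bup by (simp add: doubleton_eq_iff)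
        then have se: "s = tri u p e" using f(5) tri_perm1[of p u e] by auto
        show ?thesis
        proof (rule ccontr)
          assume "s \<noteq> tri u p w" then have ew: "e \<noteq> w" using se by auto
          show False
          proof (rule repl3[OF s a2(4)])
            show "t \<inter> s = {}" unfolding t se by (rule tri_disj) (use dd f(4) ew in auto)
            show "t \<inter> tri w q a2 = {}" unfolding t by (rule tri_disj) (use dd a2 in auto)
            show "s \<inter> tri w q a2 = {}" unfolding se by (rule tri_disj) (use dd f(4) a2 in auto)
          qed
        qed
      qed
      obtain s0 where s0: "singly_attached E \<V> s0 \<psi>1" using bb unfolding base_def by blast
      have ex1: "\<exists>!s. singly_attached E \<V> s \<psi>1" using s0 all by blast
      have "tri_verts (tri u p w) - tri_verts \<psi>1 = {w}" using p1 dd by (auto simp: tri_verts_tri)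
      then have aw: "anchor (tri u p w) \<psi>1 = w" unfolding anchor_def by simp
      have anc: "\<forall>s. singly_attached E \<V> s \<psi>1 \<longrightarrow> anchor s \<psi>1 \<in> tri_verts t"
      proof (intro allI impI)
        fix s assume "singly_attached E \<V> s \<psi>1"
        then have "s = tri u p w" by (rule all)
        then show "anchor s \<psi>1 \<in> tri_verts t" using aw t by (simp add: tri_verts_tri)
      qed
      have "v \<notin> base_edge E \<V> \<psi>1" using be bup dd by auto
      then show ?thesis using ex1 anc vert by blast
    qed
  qed
  show ?thesis
  proof (intro conjI)
    show "\<not> (tri_type E \<V> \<psi>1 = 3 \<and> tri_type E \<V> \<psi>2 = 3)" by (rule not33)
    show "(tri_type E \<V> \<psi>1 = 1 \<and> tri_type E \<V> \<psi>2 = 1)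
            \<or> (tri_type E \<V> \<psi>1 = 1 \<and> tri_type E \<V> \<psi>2 = 3)
            \<or> (tri_type E \<V> \<psi>1 = 3 \<and> tri_type E \<V> \<psi>2 = 1)" using T1 T2 not33 by auto
  qed (rule part2)
qed

theorem proposition12:
  fixes E :: "'a set set" and \<V> :: "'a set set set" and t \<psi>1 \<psi>2 :: "'a set set"
  assumes "simple_graph E"
    and "max_packing E \<V>"
    and "is_triangle E t" and "t \<notin> \<V>"
    and "\<psi>1 \<noteq> \<psi>2"
    and "{\<phi> \<in> \<V>. t \<inter> \<phi> \<noteq> {}} = {\<psi>1, \<psi>2}"
    and "tri_type E \<V> \<psi>1 \<noteq> 0" and "tri_type E \<V> \<psi>2 \<noteq> 0"
  shows "\<not> (tri_type E \<V> \<psi>1 = 3 \<and> tri_type E \<V> \<psi>2 = 3)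
         \<and> ((tri_type E \<V> \<psi>1 = 1 \<and> tri_type E \<V> \<psi>2 = 1)
            \<or> (tri_type E \<V> \<psi>1 = 1 \<and> tri_type E \<V> \<psi>2 = 3)
            \<or> (tri_type E \<V> \<psi>1 = 3 \<and> tri_type E \<V> \<psi>2 = 1))
         \<and> (tri_type E \<V> \<psi>1 = 1 \<and> tri_type E \<V> \<psi>2 = 3 \<longrightarrow>
              (base_edge E \<V> \<psi>1 \<in> t
               \<or> ((\<exists>!s. singly_attached E \<V> s \<psi>1) \<and>
                  (\<forall>s. singly_attached E \<V> s \<psi>1 \<longrightarrow> anchor s \<psi>1 \<in> tri_verts t)))
            \<and> ((\<exists>!s. singly_attached E \<V> s \<psi>1) \<and>
                  (\<forall>s. singly_attached E \<V> s \<psi>1 \<longrightarrow> anchor s \<psi>1 \<in> tri_verts t)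
               \<longrightarrow> (\<exists>v. tri_verts \<psi>1 \<inter> tri_verts \<psi>2 = {v} \<and> v \<notin> base_edge E \<V> \<psi>1)))"
proof -
  note A = assms
  have fin: "finite E" using assms(1) unfolding simple_graph_def by blast
  have mp: "max_packing E \<V>" by fact
  have pV: "edge_disjoint_packing E \<V>" using mp by (rule mp_pack)
  have V1: "\<psi>1 \<in> \<V>" and V2: "\<psi>2 \<in> \<V>" and tm1: "t \<inter> \<psi>1 \<noteq> {}" and tm2: "t \<inter> \<psi>2 \<noteq> {}"
    using assms(6) by blast+
  have dj: "\<psi>1 \<inter> \<psi>2 = {}" using pack_disj[OF pV V1 V2 assms(5)] .
  obtain a b c where abc: "a \<noteq> b" "b \<noteq> c" "a \<noteq> c" and t0: "t = tri a b c"
    using assms(3) unfolding is_triangle_tri by blast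
  obtain x y z where xyz: "x \<noteq> y" "y \<noteq> z" "x \<noteq> z" and p10: "\<psi>1 = tri x y z"
    using pack_tri[OF pV V1] unfolding is_triangle_tri by blast
  obtain x' y' z' where xyz': "x' \<noteq> y'" "y' \<noteq> z'" "x' \<noteq> z'" and p20: "\<psi>2 = tri x' y' z'"
    using pack_tri[OF pV V2] unfolding is_triangle_tri by blast
  obtain r1 r2 where r: "r1 \<noteq> r2" "r1 \<in> {a,b,c}" "r2 \<in> {a,b,c}" "r1 \<in> {x,y,z}" "r2 \<in> {x,y,z}"
    using tm1 tri_inter[OF abc xyz] t0 p10 by blast
  obtain w where w: "{a,b,c} = {r1,r2,w}" "w \<noteq> r1" "w \<noteq> r2" using third[OF abc r(1-3)] by blast
  obtain p where p: "{x,y,z} = {r1,r2,p}" "p \<noteq> r1" "p \<noteq> r2" using third[OF xyz r(1) r(4,5)] by blast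
  have t1: "t = tri r1 r2 w" using t0 w tri_eq[OF abc r(1)] by (metis w(2,3))
  have p1: "\<psi>1 = tri r1 r2 p" using p10 p tri_eq[OF xyz r(1)] by (metis p(2,3))
  have "w \<noteq> p"
  proof
    assume "w = p" then have "t = \<psi>1" using t1 p1 by simp
    then show False using assms(4) V1 by simp
  qed
  have notboth: "\<not> (r1 \<in> {x',y',z'} \<and> r2 \<in> {x',y',z'})"
  proof
    assume "r1 \<in> {x',y',z'} \<and> r2 \<in> {x',y',z'}"
    then have "{r1,r2} \<in> \<psi>2" using p20 dbl_mem_tri[OF xyz' r(1)] by blast
    moreover have "{r1,r2} \<in> \<psi>1" using p1 unfolding tri_def by blast
    ultimately show False using dj by blast
  qed
  obtain m1 m2 where m: "m1 \<noteq> m2" "m1 \<in> {r1,r2,w}" "m2 \<in> {r1,r2,w}" "m1 \<in> {x',y',z'}" "m2 \<in> {x',y',z'}"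
    using tm2 tri_inter[OF _ _ _ xyz'] t1 p20 r(1) w(2,3) by (metis (no_types, lifting))
  have "w \<in> {x',y',z'} \<and> (\<exists>m. (m = r1 \<or> m = r2) \<and> m \<in> {x',y',z'})"
    using m notboth by blast
  then obtain m where mw: "w \<in> {x',y',z'}" "m = r1 \<or> m = r2" "m \<in> {x',y',z'}" by blast
  have "m \<noteq> w" using mw w by auto
  obtain q where q: "{x',y',z'} = {m,w,q}" "q \<noteq> m" "q \<noteq> w"
    using third[OF xyz' \<open>m \<noteq> w\<close> mw(3) mw(1)] by blast
  have p2: "\<psi>2 = tri m w q" using p20 q tri_eq[OF xyz' \<open>m \<noteq> w\<close>] by (metis q(2,3))
  from mw(2) show ?thesis
  proof
    assume "m = r1"
    show ?thesis
    proof (rule core[OF fin mp A(3,4,5,6,7,8)])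
      show "t = tri r2 r1 w" using t1 tri_perm1 by metis
      show "\<psi>1 = tri r2 r1 p" using p1 tri_perm1 by metis
      show "\<psi>2 = tri r1 w q" using p2 \<open>m = r1\<close> by simp
    qed (use r w p q \<open>m = r1\<close> in auto)
  next
    assume "m = r2"
    show ?thesis
    proof (rule core[OF fin mp A(3,4,5,6,7,8) t1 p1])
      show "\<psi>2 = tri r2 w q" using p2 \<open>m = r2\<close> by simp
    qed (use r w p q \<open>m = r2\<close> in auto)
  qed
qed

end
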